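(* Let $m,n\ge 1$ and let $k>0$ and $l$ be fixed integers. Let $P,Q$ be constant $n\times n$ complex matrices, let $\mathfrak{R}(P)$ be a finite set of distinct invertible constant $n\times n$ matrices $\Lambda$ with $-(\Lambda^{k}+\Lambda^{k-l})=P$, and let $\mathfrak{R}(Q)$ be a finite set of distinct invertible constant $n\times n$ matrices $\tilde\Lambda$ with $-(\tilde\Lambda^{k}+\tilde\Lambda^{k-l})=Q$. For each $\Lambda\in\mathfrak{R}(P)$ let $A_\Lambda$ be a constant $m\times n$ matrix, for each $\tilde\Lambda\in\mathfrak{R}(Q)$ let $B_{\tilde\Lambda}$ be a constant $n\times m$ matrix, and for each pair let $X_{\tilde\Lambda,\Lambda}$ be a constant $n\times n$ matrix satisfying $\tilde\Lambda^{-l}X_{\tilde\Lambda,\Lambda}\Lambda^{l}-X_{\tilde\Lambda,\Lambda}=B_{\tilde\Lambda}A_\Lambda$. Let $\tilde\omega=\tilde\omega(t)$ be a differentiable $n\times n$ matrix function of $t$ only with $Q\,\tilde\omega=\tilde\omega\,P$, and set $\gamma_2=-\tilde\omega_t$. Define $$\theta=\sum_{\Lambda\in\mathfrak{R}(P)}A_\Lambda e^{\Lambda^l t}\Lambda^j,\qquad \eta=\sum_{\tilde\Lambda\in\mathfrak{R}(Q)}e^{-\tilde\Lambda^l t}\tilde\Lambda^{-j}B_{\tilde\Lambda},$$ $$\tilde\Omega=\sum_{\Lambda\in\mathfrak{R}(P),\,\tilde\Lambda\in\mathfrak{R}(Q)}e^{-\tilde\Lambda^l t}\tilde\Lambda^{-j}X_{\tilde\Lambda,\Lambda}e^{\Lambda^l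 t}\Lambda^j+\tilde\omega,$$ and assume $\tilde\Omega$ is invertible. Let $\varphi_0$ be a constant $m\times m$ matrix. Then $$\varphi=\varphi_0+\theta\,\tilde\Omega^{-1}\eta_{(-l)},\qquad \hat q=-\theta\,\tilde\Omega^{-1}\gamma_2,\qquad \tilde r=-\tilde\Omega_{(l)}^{-1}\eta$$ solve the system $$(\varphi_{(k)}-\varphi)_t+(\varphi_{(k)}-\varphi+I)(\varphi_{(l)}-\varphi)_{(k-l)}-(\varphi_{(l)}-\varphi)(\varphi_{(k)}-\varphi+I)=(\hat q\,\tilde r_{(-l)})_{(k)}-\hat q\,\tilde r_{(-l)},$$ $$\hat q_{(k)}=-(\varphi_{(k)}-\varphi+I)\,\hat q_{(k-l)}-\hat q\,P,\qquad \tilde r_{(-l)}=-\tilde r\,(\varphi_{(k)}-\varphi+I)-P\,\tilde r_{(k-l)}.$$ Consequently $W=\varphi_{(1)}-\varphi+\frac1k I$ together with $\hat q,\tilde r$ solves $$\Big(\sum_{i=0}^{k-1}W_{(i)}\Big)_t+\sum_{i=0}^{k-1}W_{(i)}\sum_{i=k-l}^{k-1}W_{(i)}-\sum_{i=0}^{l-1}W_{(i)}\sum_{i=0}^{k-1}W_{(i)}=(\hat q\,\tilde r_{(-l)})_{(k)}-\hat q\,\tilde r_{(-l)},$$ $$\hat q_{(k)}=-\sum_{i=0}^{k-1}W_{(i)}\,\hat q_{(k-l)}-\hat q\,P,\qquad \tilde r_{(-l)}=-\tilde r\sum_{i=0}^{k-1}W_{(i)}-P\,\tilde r_{(k-l)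}.$$
   Context: All dependent variables are matrix-valued functions of a continuous variable $t$ and a discrete variable $j\in\mathbb{Z}$; subscript $t$ denotes the derivative with respect to $t$, and for an integer $s$, $f_{(s)}(t,j)=f(t,j+s)$ denotes the shifted function. $I$ denotes the identity matrix. *)

theory Defs
  imports "HOL-Analysis.Analysis"
begin

fun matpow :: "'a::comm_ring_1^'n^'n \<Rightarrow> nat \<Rightarrow> 'a^'n^'n" where
  "matpow M 0 = mat 1"
| "matpow M (Suc n) = M ** matpow M n"

text \<open>Integer powers of square matrices; negative powers use the matrix inverse
  (only meaningful for invertible matrices).\<close>
definition mpow_int :: "complex^'n^'n \<Rightarrow> int \<Rightarrow> complex^'n^'n" where
  "mpow_int M j = (if 0 \<le> j then matpow M (nat j) else matpow (matrix_inv M) (nat (- j)))"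

definition mexp :: "complex^'n^'n \<Rightarrow> complex^'n^'n" where
  "mexp M = (\<Sum>i. (1 / fact i) *\<^sub>R matpow M i)"

text \<open>Sum with integer limits, using the standard convention for reversed limits:
  \<Sum>_{i=a}^{b} f i = - \<Sum>_{i=b+1}^{a-1} f i when b < a - 1 (empty when b = a - 1).\<close>
definition isum :: "(int \<Rightarrow> 'a::ab_group_add) \<Rightarrow> int \<Rightarrow> int \<Rightarrow> 'a" where
  "isum f a b = (if a \<le> b + 1 then sum f {a..b} else - sum f {b+1..a-1})"

end

theory Submission
  imports Defs
begin

typedef (overloaded) 'n op = "UNIV :: ((complex^'n) \<Rightarrow>\<^sub>L (complex^'n)) set" by simp
setup_lifting type_definition_op

instantiation op :: (finite) real_normed_vector
begin
lift_definition norm_op :: "'a op \<Rightarrow> real" is norm .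
lift_definition minus_op :: "'a op \<Rightarrow> 'a op \<Rightarrow> 'a op" is "(-)" .
lift_definition plus_op :: "'a op \<Rightarrow> 'a op \<Rightarrow> 'a op" is "(+)" .
lift_definition uminus_op :: "'a op \<Rightarrow> 'a op" is "uminus" .
lift_definition zero_op :: "'a op" is "0" .
lift_definition scaleR_op :: "real \<Rightarrow> 'a op \<Rightarrow> 'a op" is "scaleR" .
definition dist_op :: "'a op \<Rightarrow> 'a op \<Rightarrow> real" where "dist_op a b = norm (a - b)"
definition [code del]:
  "(uniformity :: ('a op \<times> 'a op) filter) = (INF e\<in>{0 <..}. principal {(x, y). dist x y < e})"
definition open_op :: "'a op set \<Rightarrow> bool"
  where [code del]: "open_op S = (\<forall>x\<in>S. \<forall>\<^sub>F (x', y) in uniformity. x' = x \<longrightarrow> y \<in> S)"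
definition sgn_op :: "'a op \<Rightarrow> 'a op" where "sgn_op x = scaleR (inverse (norm x)) x"
instance
  apply standard
  unfolding dist_op_def open_op_def sgn_op_def uniformity_op_def
  apply (rule refl | (transfer, force simp: norm_triangle_ineq algebra_simps))+
  done
end

instantiation op :: (finite) real_normed_algebra_1
begin
lift_definition times_op :: "'a op \<Rightarrow> 'a op \<Rightarrow> 'a op" is "(o\<^sub>L)" .
lift_definition one_op :: "'a op" is "id_blinfun" .
lemma id_blinfun_nz: "id_blinfun \<noteq> (0::(complex^'a::finite) \<Rightarrow>\<^sub>L (complex^'a))"
proof
  assume h: "id_blinfun = (0::(complex^'a) \<Rightarrow>\<^sub>L (complex^'a))"
  have "blinfun_apply (id_blinfun :: (complex^'a) \<Rightarrow>\<^sub>L (complex^'a)) (axis undefined 1) = 0"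
    by (simp add: h)
  then show False by (simp add: axis_eq_0_iff)
qed
instance
  apply standard
  apply (transfer; auto intro!: blinfun_eqI simp: blinfun.bilinear_simps norm_blinfun_compose)+
  apply (metis id_blinfun_nz)
  apply (transfer, rule norm_blinfun_compose)
  apply (transfer, simp)
  done
end

lemma dist_op_rep: "dist x y = dist (Rep_op x) (Rep_op y)"
  unfolding dist_op_def dist_norm by transfer simp

instance op :: (finite) banach
proof
  fix X :: "nat \<Rightarrow> 'a op"
  assume "Cauchy X"
  then have "Cauchy (\<lambda>n. Rep_op (X n))" unfolding Cauchy_def dist_op_rep by simp
  then obtain L where L: "(\<lambda>n. Rep_op (X n)) \<longlonglongrightarrow> L" using convergent_def Cauchy_convergent by blast
  have "X \<longlonglongrightarrow> Abs_op L"
    using L unfolding tendsto_iff dist_op_rep by (simp add: Abs_op_inverse)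
  then show "convergent X" by (auto simp: convergent_def)
qed


lemma mm_scaleR_left: "((c::real) *\<^sub>R (A::complex^'k^'m)) ** (B::complex^'n^'k) = c *\<^sub>R (A ** B)"
  by (simp add: vec_eq_iff matrix_matrix_mult_def scaleR_sum_right mult_scaleR_left)

lemma mm_scaleR_right: "(A::complex^'k^'m) ** ((c::real) *\<^sub>R (B::complex^'n^'k)) = c *\<^sub>R (A ** B)"
  by (simp add: vec_eq_iff matrix_matrix_mult_def scaleR_sum_right mult_scaleR_right)

lemma mm_add_left: "((A::complex^'k^'m) + B) ** (C::complex^'n^'k) = A ** C + B ** C"
  by (simp add: vec_eq_iff matrix_matrix_mult_def distrib_right sum.distrib)

lemma bb_mm: "bounded_bilinear (\<lambda>(A::complex^'k^'m) (B::complex^'n^'k). A ** B)"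
  unfolding bilinear_conv_bounded_bilinear[symmetric] bilinear_def linear_iff
  by (simp add: matrix_add_ldistrib mm_add_left mm_scaleR_left mm_scaleR_right)

lemma blin_mv: "bounded_linear (\<lambda>v::complex^'n. (M::complex^'n^'m) *v v)"
  unfolding linear_conv_bounded_linear[symmetric] linear_iff
  by (simp add: vec_eq_iff matrix_vector_mult_def distrib_left sum.distrib scaleR_sum_right mult_scaleR_right)

lemma norm_le_l1_gen: "norm (x::'a::real_normed_vector^'n) \<le> (\<Sum>i\<in>UNIV. norm (x$i))"
  unfolding norm_vec_def by (rule L2_set_le_sum) simp

lemma norm_axis_c: "norm (axis j (1::complex)) = 1"
  unfolding norm_vec_def L2_set_def axis_def
  by (simp add: if_distrib[where f=norm] if_distrib[where f=power2] cong: if_cong)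

definition Phi :: "complex^'n^'n \<Rightarrow> 'n::finite op" where
  "Phi M = Abs_op (Blinfun (\<lambda>v. M *v v))"

definition Psi :: "'n::finite op \<Rightarrow> complex^'n^'n" where
  "Psi F = (\<chi> i j. (blinfun_apply (Rep_op F) (axis j 1)) $ i)"

lemma Rep_Phi: "blinfun_apply (Rep_op (Phi M)) = (\<lambda>v. M *v v)"
  unfolding Phi_def by (simp add: Abs_op_inverse bounded_linear_Blinfun_apply[OF blin_mv])

lemma Psi_Phi: "Psi (Phi M) = M"
  by (simp add: Psi_def Rep_Phi vec_eq_iff matrix_vector_mult_def axis_def if_distrib cong: if_cong)

lemma Phi_mult: "Phi (M ** N) = Phi M * Phi N"
  apply (rule Rep_op_inject[THEN iffD1])
  apply (rule blinfun_eqI)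
  by (simp add: times_op.rep_eq Rep_Phi matrix_vector_mul_assoc)

lemma Phi_one: "Phi (mat 1) = 1"
  apply (rule Rep_op_inject[THEN iffD1])
  apply (rule blinfun_eqI)
  by (simp add: one_op.rep_eq Rep_Phi)

lemma Phi_pow: "Phi (matpow M i) = Phi M ^ i"
  by (induction i) (simp_all add: Phi_one Phi_mult)

lemma Psi_linear: "bounded_linear (Psi :: 'n::finite op \<Rightarrow> _)"
proof (rule bounded_linear_intro[where K="real (CARD('n)) * real (CARD('n))"])
  fix x y :: "'n op" and r :: real
  show "Psi (x + y) = Psi x + Psi y"
    by (simp add: Psi_def vec_eq_iff plus_op.rep_eq blinfun.add_left)
  show "Psi (r *\<^sub>R x) = r *\<^sub>R Psi x"
    by (simp add: Psi_def vec_eq_iff scaleR_op.rep_eq blinfun.scaleR_left)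
  have e: "norm ((blinfun_apply (Rep_op x) (axis j 1)) $ i) \<le> norm x" for i j
  proof -
    have "norm ((blinfun_apply (Rep_op x) (axis j 1)) $ i) \<le> norm (blinfun_apply (Rep_op x) (axis j 1))"
      by (rule Finite_Cartesian_Product.norm_nth_le)
    also have "\<dots> \<le> norm (Rep_op x) * norm (axis j (1::complex))" by (rule norm_blinfun)
    also have "\<dots> = norm x" by (simp add: norm_op.rep_eq norm_axis_c)
    finally show ?thesis .
  qed
  have "norm (Psi x) \<le> (\<Sum>i\<in>UNIV. norm (Psi x $ i))" by (rule norm_le_l1_gen)
  also have "\<dots> \<le> (\<Sum>i\<in>(UNIV::'n set). \<Sum>j\<in>(UNIV::'n set). norm x)"
  proof (rule sum_mono)
    fix i
    have "norm (Psi x $ i) \<le> (\<Sum>j\<in>UNIV. norm (Psi x $ i $ j))" by (rule norm_le_l1_gen)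
    also have "\<dots> \<le> (\<Sum>j\<in>(UNIV::'n set). norm x)"
      by (rule sum_mono) (simp add: Psi_def e)
    finally show "norm (Psi x $ i) \<le> (\<Sum>j\<in>(UNIV::'n set). norm x)" .
  qed
  also have "\<dots> = norm x * (real (CARD('n)) * real (CARD('n)))" by simp
  finally show "norm (Psi x) \<le> norm x * (real (CARD('n)) * real (CARD('n)))" .
qed

lemma Psi_scaleR: "Psi (r *\<^sub>R x) = r *\<^sub>R Psi x"
  by (simp add: Psi_def vec_eq_iff scaleR_op.rep_eq blinfun.scaleR_left)

lemma Psi_Phi_mult: "Psi (Phi M * Y) = M ** Psi Y"
  by (simp add: Psi_def vec_eq_iff times_op.rep_eq Rep_Phi matrix_vector_mult_def matrix_matrix_mult_def)

lemma mexp_sums: "(\<lambda>i. (1 / fact i) *\<^sub>R matpow M i) sums Psi (exp (Phi M))"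
proof -
  have "(\<lambda>i. Phi M ^ i /\<^sub>R fact i) sums exp (Phi M)"
    unfolding exp_def by (rule summable_sums[OF summable_exp_generic])
  from bounded_linear.sums[OF Psi_linear this]
  have "(\<lambda>i. Psi (Phi M ^ i /\<^sub>R fact i)) sums Psi (exp (Phi M))" .
  moreover have "Psi (Phi M ^ i /\<^sub>R fact i) = (1 / fact i) *\<^sub>R matpow M i" for i
    by (simp add: Psi_scaleR Phi_pow[symmetric] Psi_Phi divide_inverse_commute)
  ultimately show ?thesis by simp
qed

lemma mexp_Psi: "mexp M = Psi (exp (Phi M))"
  unfolding mexp_def using mexp_sums sums_unique by metis

lemma Phi_scaleR: "Phi (c *\<^sub>R M) = c *\<^sub>R Phi M"
  apply (rule Rep_op_inject[THEN iffD1])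
  apply (rule blinfun_eqI)
  by (simp add: scaleR_op.rep_eq blinfun.scaleR_left Rep_Phi vec_eq_iff matrix_vector_mult_def scaleR_sum_right mult_scaleR_left)

lemma mexp_deriv: "((\<lambda>t. mexp (t *\<^sub>R M)) has_vector_derivative (M ** mexp (t *\<^sub>R M))) (at t)"
proof -
  have "((\<lambda>t. Psi (exp (t *\<^sub>R Phi M))) has_vector_derivative Psi (Phi M * exp (t *\<^sub>R Phi M))) (at t)"
    by (rule bounded_linear.has_vector_derivative[OF Psi_linear exp_scaleR_has_vector_derivative_left])
  moreover have "\<And>t. mexp (t *\<^sub>R M) = Psi (exp (t *\<^sub>R Phi M))"
    by (simp add: mexp_Psi Phi_scaleR)
  moreover have "Psi (Phi M * exp (t *\<^sub>R Phi M)) = M ** mexp (t *\<^sub>R M)"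
    by (simp only: Psi_Phi_mult mexp_Psi Phi_scaleR)
  ultimately show ?thesis by simp
qed

lemma matpow_commute: "N ** M = M ** N \<Longrightarrow> N ** matpow M i = matpow M i ** N"
proof (induction i)
  case (Suc i)
  assume h: "N ** M = M ** N"
  have "N ** matpow M (Suc i) = (N ** M) ** matpow M i" by (simp add: matrix_mul_assoc)
  also have "\<dots> = M ** (N ** matpow M i)" by (simp only: h matrix_mul_assoc)
  also have "\<dots> = M ** (matpow M i ** N)" using Suc h by simp
  also have "\<dots> = matpow M (Suc i) ** N" by (simp add: matrix_mul_assoc)
  finally show ?case .
qed simp

lemma blin_mm_right: "bounded_linear (\<lambda>X::complex^'n^'k. (N::complex^'k^'m) ** X)"
  using bounded_bilinear.bounded_linear_right[OF bb_mm[where 'k='k and 'm='m and 'n='n]] by simp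

lemma blin_mm_left: "bounded_linear (\<lambda>X::complex^'k^'m. X ** (N::complex^'n^'k))"
  using bounded_bilinear.bounded_linear_left[OF bb_mm[where 'k='k and 'm='m and 'n='n]] by simp

lemma mexp_commute:
  assumes "N ** M = M ** (N::complex^'n^'n)"
  shows "N ** mexp M = mexp M ** N"
proof -
  have s: "(\<lambda>i. (1 / fact i) *\<^sub>R matpow M i) sums mexp M"
    using mexp_sums mexp_Psi by metis
  have a: "(\<lambda>i. N ** ((1 / fact i) *\<^sub>R matpow M i)) sums (N ** mexp M)"
    by (rule bounded_linear.sums[OF blin_mm_right s])
  have b: "(\<lambda>i. ((1 / fact i) *\<^sub>R matpow M i) ** N) sums (mexp M ** N)"
    by (rule bounded_linear.sums[OF blin_mm_left s])
  have "\<And>i. N ** ((1 / fact i) *\<^sub>R matpow M i) = ((1 / fact i) *\<^sub>R matpow M i) ** N"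
    by (simp only: mm_scaleR_left mm_scaleR_right matpow_commute[OF assms])
  with a b show ?thesis using sums_unique2 by (metis (no_types, lifting) ext)
qed

lemma mm_diff_left: "((A::complex^'k^'m) - B) ** (C::complex^'n^'k) = A ** C - B ** C"
  by (simp add: vec_eq_iff matrix_matrix_mult_def left_diff_distrib sum_subtractf)

lemma mm_diff_right: "(A::complex^'k^'m) ** ((B::complex^'n^'k) - C) = A ** B - A ** C"
  by (simp add: vec_eq_iff matrix_matrix_mult_def right_diff_distrib sum_subtractf)

lemma mm_neg_left: "(- (A::complex^'k^'m)) ** (C::complex^'n^'k) = - (A ** C)"
  by (simp add: vec_eq_iff matrix_matrix_mult_def sum_negf)

lemma mm_neg_right: "(A::complex^'k^'m) ** (- (C::complex^'n^'k)) = - (A ** C)"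
  by (simp add: vec_eq_iff matrix_matrix_mult_def sum_negf)

lemma tendsto_mm:
  "(f \<longlongrightarrow> a) F \<Longrightarrow> (g \<longlongrightarrow> b) F \<Longrightarrow> ((\<lambda>x. (f x::complex^'k^'m) ** (g x::complex^'n^'k)) \<longlongrightarrow> a ** b) F"
  using bounded_bilinear.tendsto[OF bb_mm, of f a F g b] by simp

lemma deriv_mm:
  "(f has_vector_derivative f') (at x) \<Longrightarrow> (g has_vector_derivative g') (at x) \<Longrightarrow>
   ((\<lambda>x. (f x::complex^'k^'m) ** (g x::complex^'n^'k)) has_vector_derivative (f x ** g' + f' ** g x)) (at x)"
  using bounded_bilinear.has_vector_derivative[OF bb_mm, of f f' x UNIV g g'] by simp

lemma carat_vec:
  fixes f R :: "real \<Rightarrow> 'b::real_normed_vector"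
  assumes eq: "\<And>y. f y = f t + (y - t) *\<^sub>R R y" and c: "isCont R t"
  shows "(f has_vector_derivative R t) (at t)"
  unfolding has_vector_derivative_def has_derivative_iff_norm
proof
  show "bounded_linear (\<lambda>x. x *\<^sub>R R t)" by (rule bounded_linear_scaleR_left)
  have "((\<lambda>y. norm (R y - R t)) \<longlongrightarrow> 0) (at t)"
    using c unfolding isCont_def by (simp add: tendsto_norm_zero_iff LIM_zero)
  moreover have "\<forall>\<^sub>F y in at t. norm (R y - R t) = norm (f y - f t - (y - t) *\<^sub>R R t) / norm (y - t)"
    unfolding eventually_at_filter
  proof (rule eventuallyI, intro impI)
    fix y assume "y \<noteq> t"
    have "f y - f t - (y - t) *\<^sub>R R t = (y - t) *\<^sub>R (R y - R t)"
      using eq[of y] by (simp add: algebra_simps)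
    then show "norm (R y - R t) = norm (f y - f t - (y - t) *\<^sub>R R t) / norm (y - t)"
      using \<open>y \<noteq> t\<close> by simp
  qed
  ultimately show "((\<lambda>y. norm (f y - f t - (y - t) *\<^sub>R R t) / norm (y - t)) \<longlongrightarrow> 0) (at t)"
    by (rule Lim_transform_eventually)
qed

lemma carat_vec_conv:
  fixes F :: "real \<Rightarrow> 'b::real_normed_vector"
  assumes "(F has_vector_derivative F') (at t)"
  shows "isCont (\<lambda>y. if y = t then F' else (1 / (y - t)) *\<^sub>R (F y - F t)) t"
proof -
  have "((\<lambda>y. norm (F y - F t - (y - t) *\<^sub>R F') / norm (y - t)) \<longlongrightarrow> 0) (at t)"
    using assms unfolding has_vector_derivative_def has_derivative_iff_norm by simp
  moreover have "\<forall>\<^sub>F y in at t. norm (F y - F t - (y - t) *\<^sub>R F') / norm (y - t) =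
      norm ((if y = t then F' else (1 / (y - t)) *\<^sub>R (F y - F t)) - F')"
    unfolding eventually_at_filter
  proof (rule eventuallyI, intro impI)
    fix y assume "y \<noteq> t"
    then have "F y - F t - (y - t) *\<^sub>R F' = (y - t) *\<^sub>R ((1 / (y - t)) *\<^sub>R (F y - F t) - F')"
      by (simp add: algebra_simps)
    then show "norm (F y - F t - (y - t) *\<^sub>R F') / norm (y - t) =
      norm ((if y = t then F' else (1 / (y - t)) *\<^sub>R (F y - F t)) - F')"
      using \<open>y \<noteq> t\<close> by simp
  qed
  ultimately have "((\<lambda>y. norm ((if y = t then F' else (1 / (y - t)) *\<^sub>R (F y - F t)) - F')) \<longlongrightarrow> 0) (at t)"
    by (rule Lim_transform_eventually)
  then have "((\<lambda>y. (if y = t then F' else (1 / (y - t)) *\<^sub>R (F y - F t))) \<longlongrightarrow> F') (at t)"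
    by (simp add: tendsto_norm_zero_iff LIM_zero_iff)
  then show ?thesis unfolding isCont_def by simp
qed

lemma inv_lr:
  assumes "invertible (A::complex^'n^'n)"
  shows "A ** matrix_inv A = mat 1" "matrix_inv A ** A = mat 1"
proof -
  have "\<exists>A'. A ** A' = mat 1 \<and> A' ** A = mat 1" using assms unfolding invertible_def .
  then have "A ** matrix_inv A = mat 1 \<and> matrix_inv A ** A = mat 1"
    unfolding matrix_inv_def by (rule someI_ex)
  then show "A ** matrix_inv A = mat 1" "matrix_inv A ** A = mat 1" by auto
qed

definition cmat :: "'n \<Rightarrow> 'n \<Rightarrow> complex^'n^'n \<Rightarrow> complex^'n^'n::finite" where
  "cmat i j A = (\<chi> a b. if b = i then (if a = j then 1 else 0) else A$a$b)"

lemma mv_axis: "((M::complex^'n^'m) *v axis j 1) $ i = M $ i $ j"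
  by (simp add: matrix_vector_mult_def axis_def if_distrib cong: if_cong)

lemma inv_entry:
  assumes "invertible (A::complex^'n^'n)"
  shows "matrix_inv A $ i $ j = det (cmat i j A) / det A"
proof -
  have d: "det A \<noteq> 0" using assms invertible_det_nz by blast
  have "A *v (matrix_inv A *v axis j 1) = axis j 1"
    by (simp add: matrix_vector_mul_assoc inv_lr[OF assms])
  then have "matrix_inv A *v axis j 1 = (\<chi> k. det(\<chi> a b. if b=k then (axis j 1::complex^'n)$a else A$a$b) / det A)"
    using cramer[OF d] by blast
  then have "(matrix_inv A *v axis j 1) $ i = det(\<chi> a b. if b=i then (axis j 1::complex^'n)$a else A$a$b) / det A"
    by simp
  moreover have "(\<chi> a b. if b=i then (axis j 1::complex^'n)$a else A$a$b) = cmat i j A"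
    by (simp add: cmat_def vec_eq_iff axis_def)
  ultimately show ?thesis by (simp add: mv_axis)
qed

lemma det_tendsto: "(F \<longlongrightarrow> A) net \<Longrightarrow> ((\<lambda>s. det (F s :: complex^'n^'n)) \<longlongrightarrow> det A) net"
  unfolding det_def by (intro tendsto_intros)

lemma cmat_tendsto: "(F \<longlongrightarrow> A) net \<Longrightarrow> ((\<lambda>s. cmat i j (F s)) \<longlongrightarrow> cmat i j A) net"
  unfolding cmat_def
  by (intro tendsto_vec_lambda) (auto intro: tendsto_vec_nth)

lemma inv_tendsto:
  assumes "(F \<longlongrightarrow> A) net" "\<And>s. invertible (F s)" "invertible (A::complex^'n^'n)"
  shows "((\<lambda>s. matrix_inv (F s)) \<longlongrightarrow> matrix_inv A) net"
proof -
  have e: "matrix_inv B = (\<chi> i j. det (cmat i j B) / det B)" if "invertible B" for B :: "complex^'n^'n"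
    by (simp add: vec_eq_iff inv_entry[OF that])
  have d: "det A \<noteq> 0" using assms invertible_det_nz by blast
  have "((\<lambda>s. (\<chi> i j. det (cmat i j (F s)) / det (F s))) \<longlongrightarrow> (\<chi> i j. det (cmat i j A) / det A)) net"
    by (intro tendsto_vec_lambda tendsto_divide det_tendsto cmat_tendsto assms(1) d)
  then show ?thesis by (simp add: e assms)
qed

lemma inv_deriv:
  assumes F: "(F has_vector_derivative F') (at t)" and inv: "\<And>s. invertible (F s :: complex^'n^'n)"
  shows "((\<lambda>s. matrix_inv (F s)) has_vector_derivative - (matrix_inv (F t) ** F' ** matrix_inv (F t))) (at t)"
proof -
  define G where "G s = matrix_inv (F s)" for s
  define RF where "RF y = (if y = t then F' else (1 / (y - t)) *\<^sub>R (F y - F t))" for y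
  have cF: "isCont F t" by (rule has_vector_derivative_continuous[OF F])
  have cG: "(G \<longlongrightarrow> G t) (at t)"
    unfolding G_def by (rule inv_tendsto[OF cF[unfolded isCont_def] inv inv])
  have cRF: "(RF \<longlongrightarrow> RF t) (at t)"
    using carat_vec_conv[OF F] unfolding RF_def isCont_def by simp
  have cR: "isCont (\<lambda>y. - (G y ** RF y ** G t)) t"
    unfolding isCont_def by (intro tendsto_minus tendsto_mm cG cRF tendsto_const)
  have eq: "G y = G t + (y - t) *\<^sub>R (- (G y ** RF y ** G t))" for y
  proof (cases "y = t")
    case False
    have "(y - t) *\<^sub>R RF y = F y - F t" using False by (simp add: RF_def)
    moreover have "(y - t) *\<^sub>R (- (G y ** RF y ** G t)) = - (G y ** ((y - t) *\<^sub>R RF y) ** G t)"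
      by (simp only: mm_scaleR_left mm_scaleR_right scaleR_minus_right)
    ultimately have "(y - t) *\<^sub>R (- (G y ** RF y ** G t)) = - (G y ** (F y - F t) ** G t)"
      by simp
    also have "\<dots> = - (G y ** F y ** G t) + G y ** (F t ** G t)"
      by (simp add: mm_diff_left mm_diff_right matrix_mul_assoc)
    also have "\<dots> = G y - G t"
      by (simp add: G_def inv_lr[OF inv])
    finally show ?thesis by simp
  qed simp
  have "(G has_vector_derivative (- (G t ** RF t ** G t))) (at t)"
    by (rule carat_vec[OF eq cR])
  moreover have "G = (\<lambda>s. matrix_inv (F s))" by (simp add: G_def fun_eq_iff)
  ultimately show ?thesis by (simp add: G_def RF_def)
qed


lemmas mms = matrix_mul_assoc mm_add_left matrix_add_ldistrib mm_diff_left mm_diff_right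
  mm_neg_left mm_neg_right matrix_mul_lid matrix_mul_rid

lemma algA:
  fixes th :: "int \<Rightarrow> complex^'n^'m" and et :: "int \<Rightarrow> complex^'m^'n"
    and Om G :: "int \<Rightarrow> complex^'n^'n" and P Q :: "complex^'n^'n"
  assumes inv1: "\<And>j. G j ** Om j = mat 1" and inv2: "\<And>j. Om j ** G j = mat 1"
    and R1: "\<And>j. Om (j + l) = Om j + et j ** th j"
    and R2: "\<And>j. th (j + k) + th (j + k - l) = - (th j ** P)"
    and R4: "\<And>j. Q ** Om (j + k - l) = Om j ** P + et (j - l) ** th (j + k - l)"
  shows "(mat 1 + th (j+k) ** G (j+k) ** et (j+k-l) - th j ** G j ** et (j-l)) ** (th (j+k-l) ** G (j+k-l))
     = - (th (j+k) ** G (j+k)) - th j ** G j ** Q"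
proof -
  have i1: "\<And>Z j. Z ** G j ** Om j = Z" using inv1 by (metis matrix_mul_assoc matrix_mul_rid)
  have i2: "\<And>Z j. Z ** Om j ** G j = Z" using inv2 by (metis matrix_mul_assoc matrix_mul_rid)
  have o: "Om (j+k) = Om (j+k-l) + et (j+k-l) ** th (j+k-l)" using R1[of "j+k-l"] by simp
  have a: "th (j+k) ** G (j+k-l) = th (j+k) ** G (j+k) ** Om (j+k) ** G (j+k-l)"
    by (simp only: i1)
  also have "\<dots> = th (j+k) ** G (j+k) + th (j+k) ** G (j+k) ** et (j+k-l) ** th (j+k-l) ** G (j+k-l)"
    unfolding o by (simp add: mms i2)
  finally have a: "th (j+k) ** G (j+k) ** et (j+k-l) ** th (j+k-l) ** G (j+k-l) = th (j+k) ** G (j+k-l) - th (j+k) ** G (j+k)"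
    by (simp add: algebra_simps)
  have b: "th (j+k) ** G (j+k-l) + th (j+k-l) ** G (j+k-l) = - (th j ** P ** G (j+k-l))"
    using arg_cong[OF R2[of j], of "\<lambda>X. X ** G (j+k-l)"] by (simp add: mms)
  have c: "th j ** G j ** Q = th j ** P ** G (j+k-l) + th j ** G j ** et (j-l) ** th (j+k-l) ** G (j+k-l)"
  proof -
    have "th j ** G j ** Q = th j ** G j ** Q ** Om (j+k-l) ** G (j+k-l)" by (simp only: i2)
    also have "\<dots> = th j ** G j ** (Q ** Om (j+k-l)) ** G (j+k-l)" by (simp only: matrix_mul_assoc)
    also have "\<dots> = th j ** P ** G (j+k-l) + th j ** G j ** et (j-l) ** th (j+k-l) ** G (j+k-l)"
      unfolding R4 by (simp add: mms i1)
    finally show ?thesis .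
  qed
  show ?thesis
    apply (simp add: mms a c algebra_simps)
    apply (simp add: b)
    done
qed

lemma algB:
  fixes th :: "int \<Rightarrow> complex^'n^'m" and et :: "int \<Rightarrow> complex^'m^'n"
    and Om G :: "int \<Rightarrow> complex^'n^'n" and P Q :: "complex^'n^'n"
  assumes inv1: "\<And>j. G j ** Om j = mat 1" and inv2: "\<And>j. Om j ** G j = mat 1"
    and R1: "\<And>j. Om (j + l) = Om j + et j ** th j"
    and R3: "\<And>j. et (j - l) + et j = - (Q ** et (j + k - l))"
    and R4: "\<And>j. Q ** Om (j + k - l) = Om j ** P + et (j - l) ** th (j + k - l)"
  shows "G (j+l) ** et j ** (mat 1 + th (j+k) ** G (j+k) ** et (j+k-l) - th j ** G j ** et (j-l))
     = - (G j ** et (j-l)) - P ** (G (j+k) ** et (j+k-l))"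
proof -
  have i1: "\<And>Z j. Z ** G j ** Om j = Z" using inv1 by (metis matrix_mul_assoc matrix_mul_rid)
  have i2: "\<And>Z j. Z ** Om j ** G j = Z" using inv2 by (metis matrix_mul_assoc matrix_mul_rid)
  have e1: "G (j+l) ** et j ** th j ** G j ** et (j-l) = G j ** et (j-l) - G (j+l) ** et (j-l)"
  proof -
    have "et j ** th j = Om (j+l) - Om j" using R1[of j] by simp
    then have "G (j+l) ** (et j ** th j) ** G j ** et (j-l) = G (j+l) ** (Om (j+l) - Om j) ** G j ** et (j-l)"
      by simp
    also have "\<dots> = G j ** et (j-l) - G (j+l) ** et (j-l)"
      by (simp add: mms inv1 inv2 i1 i2)
    finally show ?thesis by (simp add: mms)
  qed
  have e2: "G (j+l) ** et j + G (j+l) ** et (j-l) = - (G (j+l) ** Q ** et (j+k-l))"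
    using arg_cong[OF R3[of j], of "\<lambda>X. G (j+l) ** X"] by (simp add: mms algebra_simps eq_neg_iff_add_eq_0)
  have r4: "Q ** Om (j+k) = Om (j+l) ** P + et j ** th (j+k)"
    using R4[of "j+l"] by (simp add: algebra_simps)
  have e3: "G (j+l) ** Q ** et (j+k-l) = P ** G (j+k) ** et (j+k-l) + G (j+l) ** et j ** th (j+k) ** G (j+k) ** et (j+k-l)"
  proof -
    have "G (j+l) ** Q ** et (j+k-l) = G (j+l) ** (Q ** Om (j+k)) ** G (j+k) ** et (j+k-l)"
      by (simp add: mms i2)
    also have "\<dots> = P ** G (j+k) ** et (j+k-l) + G (j+l) ** et j ** th (j+k) ** G (j+k) ** et (j+k-l)"
      unfolding r4 by (simp add: mms inv1 i1)
    finally show ?thesis .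
  qed
  show ?thesis
    apply (simp add: mms e1 algebra_simps)
    using e2 e3 by (simp add: algebra_simps eq_neg_iff_add_eq_0)
qed

lemma algT:
  fixes th :: "int \<Rightarrow> complex^'n^'m" and et :: "int \<Rightarrow> complex^'m^'n"
    and Om G :: "int \<Rightarrow> complex^'n^'n" and P Q :: "complex^'n^'n"
  assumes inv1: "\<And>j. G j ** Om j = mat 1" and inv2: "\<And>j. Om j ** G j = mat 1"
    and R1: "\<And>j. Om (j + l) = Om j + et j ** th j"
    and R2: "\<And>j. th (j + k) + th (j + k - l) = - (th j ** P)"
    and R3: "\<And>j. et (j - l) + et j = - (Q ** et (j + k - l))"
    and R4: "\<And>j. Q ** Om (j + k - l) = Om j ** P + et (j - l) ** th (j + k - l)"
  shows "(th (j+k+l) ** G (j+k) ** et (j+k-l) - th (j+k) ** G (j+k) ** et (j+k-l-l)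
          - th (j+k) ** G (j+k) ** et (j+k-l) ** (th (j+k) ** G (j+k) ** et (j+k-l)))
       - (th (j+l) ** G j ** et (j-l) - th j ** G j ** et (j-l-l)
          - th j ** G j ** et (j-l) ** (th j ** G j ** et (j-l)))
     = - ((mat 1 + th (j+k) ** G (j+k) ** et (j+k-l) - th j ** G j ** et (j-l))
            ** (th (j+k) ** G (j+k) ** et (j+k-l) - th (j+k-l) ** G (j+k-l) ** et (j+k-l-l)))
       + (th (j+l) ** G (j+l) ** et j - th j ** G j ** et (j-l))
            ** (mat 1 + th (j+k) ** G (j+k) ** et (j+k-l) - th j ** G j ** et (j-l))"
proof -
  define U where "U = mat 1 + th (j+k) ** G (j+k) ** et (j+k-l) - th j ** G j ** et (j-l)"
  have A: "U ** (th (j+k-l) ** G (j+k-l)) = - (th (j+k) ** G (j+k)) - th j ** G j ** Q"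
    unfolding U_def by (rule algA[OF inv1 inv2 R1 R2 R4])
  have Uc: "U ** (th (j+k-l) ** G (j+k-l) ** et (j+k-l-l)) =
      - (th (j+k) ** G (j+k) ** et (j+k-l-l)) - th j ** G j ** Q ** et (j+k-l-l)"
    using arg_cong[OF A, of "\<lambda>X. X ** et (j+k-l-l)"] by (simp add: mm_diff_left mm_neg_left matrix_mul_assoc)
  have B: "G (j+l) ** et j ** U = - (G j ** et (j-l)) - P ** (G (j+k) ** et (j+k-l))"
    unfolding U_def by (rule algB[OF inv1 inv2 R1 R3 R4])
  have dU: "(th (j+l) ** G (j+l) ** et j) ** U = - (th (j+l) ** G j ** et (j-l)) - th (j+l) ** P ** G (j+k) ** et (j+k-l)"
    using arg_cong[OF B, of "\<lambda>X. th (j+l) ** X"] by (simp add: mm_diff_right mm_neg_right matrix_mul_assoc)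
  have r2: "th (j+k+l) + th (j+k) = - (th (j+l) ** P)"
    using R2[of "j+l"] by (simp add: algebra_simps)
  have r2m: "th (j+l) ** P ** G (j+k) ** et (j+k-l) = - (th (j+k+l) ** G (j+k) ** et (j+k-l)) - th (j+k) ** G (j+k) ** et (j+k-l)"
    using arg_cong[OF r2, of "\<lambda>X. X ** G (j+k) ** et (j+k-l)"] by (simp add: mms algebra_simps eq_neg_iff_add_eq_0)
  have r3: "et (j-l-l) + et (j-l) = - (Q ** et (j+k-l-l))"
    using R3[of "j-l"] by (simp add: algebra_simps)
  have r3m: "th j ** G j ** Q ** et (j+k-l-l) = - (th j ** G j ** et (j-l-l)) - th j ** G j ** et (j-l)"
    using arg_cong[OF r3, of "\<lambda>X. th j ** G j ** X"] by (simp add: mms algebra_simps eq_neg_iff_add_eq_0)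
  have rhs: "- (U ** (th (j+k) ** G (j+k) ** et (j+k-l) - th (j+k-l) ** G (j+k-l) ** et (j+k-l-l)))
       + (th (j+l) ** G (j+l) ** et j - th j ** G j ** et (j-l)) ** U
     = - (U ** (th (j+k) ** G (j+k) ** et (j+k-l))) + U ** (th (j+k-l) ** G (j+k-l) ** et (j+k-l-l))
       + (th (j+l) ** G (j+l) ** et j) ** U - (th j ** G j ** et (j-l)) ** U"
    by (simp only: mm_diff_left mm_diff_right) (simp add: algebra_simps)
  show ?thesis
    unfolding U_def[symmetric] rhs Uc dU
    unfolding U_def
    apply (simp add: mms r2m r3m)
    using r3m by (simp add: algebra_simps eq_neg_iff_add_eq_0)
qed


lemma matpow_add: "matpow M (m + n) = matpow M m ** matpow M n"
  by (induction m) (simp_all add: matrix_mul_assoc)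

lemma matpow_Suc_right: "matpow M (Suc n) = matpow M n ** M"
  using matpow_add[of M n 1] by simp

lemma mpow_nonneg: "0 \<le> z \<Longrightarrow> mpow_int M z = matpow M (nat z)"
  by (simp add: mpow_int_def)

lemma mpow_nonpos: "z \<le> 0 \<Longrightarrow> mpow_int M z = matpow (matrix_inv M) (nat (- z))"
  by (cases "z = 0") (simp_all add: mpow_int_def)

lemma mpow_zero[simp]: "mpow_int M 0 = mat 1"
  by (simp add: mpow_int_def)

lemma mpow_succ:
  assumes "invertible (M::complex^'n^'n)"
  shows "mpow_int M (z + 1) = mpow_int M z ** M"
proof (cases "0 \<le> z")
  case True
  then have "nat (z + 1) = Suc (nat z)" by simp
  then show ?thesis using True by (simp add: mpow_nonneg matpow_commute[OF refl])
next
  case False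
  define n where "n = nat (- z - 1)"
  have z: "nat (- z) = Suc n" "nat (- (z + 1)) = n" using False by (simp_all add: n_def)
  have "mpow_int M z ** M = matpow (matrix_inv M) n ** (matrix_inv M ** M)"
    using False by (simp add: mpow_nonpos z matpow_commute[OF refl] matrix_mul_assoc)
  also have "\<dots> = matpow (matrix_inv M) n" by (simp add: inv_lr[OF assms])
  also have "\<dots> = mpow_int M (z + 1)" using False by (simp add: mpow_nonpos n_def)
  finally show ?thesis by simp
qed

lemma mpow_pred:
  assumes "invertible (M::complex^'n^'n)"
  shows "mpow_int M (z - 1) = mpow_int M z ** matrix_inv M"
proof (cases "0 < z")
  case True
  define n where "n = nat (z - 1)"
  have z: "nat z = Suc n" "nat (z - 1) = n" using True by (simp_all add: n_def)
  have "mpow_int M z ** matrix_inv M = matpow M n ** (M ** matrix_inv M)"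
    using True by (simp add: mpow_nonneg z matpow_commute[OF refl] matrix_mul_assoc)
  also have "\<dots> = matpow M n" by (simp add: inv_lr[OF assms])
  also have "\<dots> = mpow_int M (z - 1)" using True by (simp add: mpow_nonneg z)
  finally show ?thesis by simp
next
  case False
  have z: "nat (1 - z) = Suc (nat (- z))" using False by simp
  show ?thesis using False by (simp add: mpow_nonpos z matpow_commute[OF refl])
qed

lemma mpow_add:
  assumes "invertible (M::complex^'n^'n)"
  shows "mpow_int M (a + b) = mpow_int M a ** mpow_int M b"
proof (induction b rule: int_induct[where k=0])
  case base
  then show ?case by simp
next
  case (step1 i)
  have "mpow_int M (a + (i + 1)) = mpow_int M (a + i) ** M"
    using mpow_succ[OF assms, of "a + i"] by (simp add: add.assoc)
  then show ?case using step1 mpow_succ[OF assms, of i] by (simp add: matrix_mul_assoc)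
next
  case (step2 i)
  have "mpow_int M (a + (i - 1)) = mpow_int M (a + i) ** matrix_inv M"
    using mpow_pred[OF assms, of "a + i"] by (simp add: algebra_simps)
  then show ?case using step2 mpow_pred[OF assms, of i] by (simp add: matrix_mul_assoc)
qed

lemma mpow_comm:
  assumes "invertible (M::complex^'n^'n)"
  shows "mpow_int M a ** mpow_int M b = mpow_int M b ** mpow_int M a"
  by (metis add.commute mpow_add[OF assms])


lemma mexp_commute_s:
  assumes "N ** M = M ** (N::complex^'n^'n)"
  shows "N ** mexp (s *\<^sub>R M) = mexp (s *\<^sub>R M) ** N"
  by (rule mexp_commute) (simp add: mm_scaleR_left mm_scaleR_right assms)

lemma E_comm:
  assumes "invertible (L::complex^'n^'n)"
  shows "mpow_int L z ** mexp (s *\<^sub>R mpow_int L l) = mexp (s *\<^sub>R mpow_int L l) ** mpow_int L z"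
  by (rule mexp_commute_s) (rule mpow_comm[OF assms])

lemma P_comm_pow:
  assumes "invertible (L::complex^'n^'n)"
  shows "(- (mpow_int L k + mpow_int L (k - l))) ** mpow_int L z = mpow_int L z ** (- (mpow_int L k + mpow_int L (k - l)))"
  by (simp add: mm_neg_left mm_neg_right mm_add_left matrix_add_ldistrib mm_diff_left mm_diff_right mpow_comm[OF assms])

lemma P_comm_E:
  assumes "invertible (L::complex^'n^'n)"
  shows "(- (mpow_int L k + mpow_int L (k - l))) ** mexp (s *\<^sub>R mpow_int L l) = mexp (s *\<^sub>R mpow_int L l) ** (- (mpow_int L k + mpow_int L (k - l)))"
  by (rule mexp_commute_s) (rule P_comm_pow[OF assms])

lemma T1_R2:
  assumes inv: "invertible (L::complex^'n^'n)"
  shows "A ** E ** mpow_int L (j + k) + A ** E ** mpow_int L (j + k - l)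
      = - (A ** E ** mpow_int L j ** (- (mpow_int L k + mpow_int L (k - l))))"
proof -
  have a: "mpow_int L (j + k - l) = mpow_int L j ** mpow_int L (k - l)"
    using mpow_add[OF inv, of j "k - l"] by (simp add: algebra_simps)
  show ?thesis
    by (simp add: a mpow_add[OF inv] mms)
qed

lemma T2_R3:
  assumes inv: "invertible (L::complex^'n^'n)"
    and cE: "(- (mpow_int L k + mpow_int L (k - l))) ** E = E ** (- (mpow_int L k + mpow_int L (k - l)))"
  shows "E ** mpow_int L (- (j - l)) ** B + E ** mpow_int L (- j) ** B
      = - ((- (mpow_int L k + mpow_int L (k - l))) ** E ** mpow_int L (- (j + k - l)) ** B)"
proof -
  have a: "mpow_int L (- (j - l)) = mpow_int L k ** mpow_int L (- (j + k - l))"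
    using mpow_add[OF inv, of k "- (j + k - l)"] by (simp add: algebra_simps)
  have b: "mpow_int L (- j) = mpow_int L (k - l) ** mpow_int L (- (j + k - l))"
    using mpow_add[OF inv, of "k - l" "- (j + k - l)"] by (simp add: algebra_simps)
  have "(- (mpow_int L k + mpow_int L (k - l))) ** E ** mpow_int L (- (j + k - l)) ** B
      = E ** (- (mpow_int L k + mpow_int L (k - l))) ** mpow_int L (- (j + k - l)) ** B"
    by (simp only: cE)
  then show ?thesis
    unfolding a b by (simp add: mms)
qed

lemma chain: "(A::complex^'k^'m) ** (B::complex^'n^'k) = C \<Longrightarrow> Z ** A ** B = Z ** C"
  by (simp add: matrix_mul_assoc[symmetric])

lemma T3_core:
  assumes invp: "invertible (L::complex^'n^'n)" and invq: "invertible (L'::complex^'n^'n)"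
    and EL: "E ** mpow_int L l = mpow_int L l ** E"
    and Xeq: "mpow_int L' (- l) ** X ** mpow_int L l - X = B ** A"
  shows "E' ** mpow_int L' (a - l) ** X ** E ** mpow_int L (b + l)
       = E' ** mpow_int L' a ** X ** E ** mpow_int L b + E' ** mpow_int L' a ** B ** A ** E ** mpow_int L b"
proof -
  have x: "mpow_int L' (- l) ** X ** mpow_int L l = X + B ** A" using Xeq by (simp add: algebra_simps)
  have a: "mpow_int L' (a - l) = mpow_int L' a ** mpow_int L' (- l)"
    using mpow_add[OF invq, of a "- l"] by simp
  have b: "mpow_int L (b + l) = mpow_int L l ** mpow_int L b"
    using mpow_add[OF invp, of l b] by (simp add: add.commute)
  have ELc: "\<And>Z. Z ** E ** mpow_int L l = Z ** mpow_int L l ** E" by (metis EL matrix_mul_assoc)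
  have "E' ** mpow_int L' (a - l) ** X ** E ** mpow_int L (b + l)
      = E' ** mpow_int L' a ** (mpow_int L' (- l) ** X ** mpow_int L l) ** E ** mpow_int L b"
    unfolding a b by (simp add: matrix_mul_assoc ELc)
  also have "\<dots> = E' ** mpow_int L' a ** X ** E ** mpow_int L b + E' ** mpow_int L' a ** B ** A ** E ** mpow_int L b"
    unfolding x by (simp add: mms)
  finally show ?thesis .
qed

lemma T3_R1:
  assumes invp: "invertible (L::complex^'n^'n)" and invq: "invertible (L'::complex^'n^'n)"
    and EL: "E ** mpow_int L l = mpow_int L l ** E"
    and Xeq: "mpow_int L' (- l) ** X ** mpow_int L l - X = B ** A"
  shows "E' ** mpow_int L' (- (j + l)) ** X ** E ** mpow_int L (j + l) - E' ** mpow_int L' (- j) ** X ** E ** mpow_int L j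
       = (E' ** mpow_int L' (- j) ** B) ** (A ** E ** mpow_int L j)"
  using T3_core[OF invp invq EL Xeq, of E' "- j" j] by (simp add: mms)

lemma T3_R4:
  assumes invp: "invertible (L::complex^'n^'n)" and invq: "invertible (L'::complex^'n^'n)"
    and EL: "E ** mpow_int L l = mpow_int L l ** E"
    and Xeq: "mpow_int L' (- l) ** X ** mpow_int L l - X = B ** A"
    and QE: "(- (mpow_int L' k + mpow_int L' (k - l))) ** E' = E' ** (- (mpow_int L' k + mpow_int L' (k - l)))"
  shows "(- (mpow_int L' k + mpow_int L' (k - l))) ** (E' ** mpow_int L' (- (j + k - l)) ** X ** E ** mpow_int L (j + k - l))
       - (E' ** mpow_int L' (- j) ** X ** E ** mpow_int L j) ** (- (mpow_int L k + mpow_int L (k - l)))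
       = (E' ** mpow_int L' (- (j - l)) ** B) ** (A ** E ** mpow_int L (j + k - l))"
proof -
  have q1: "mpow_int L' k ** mpow_int L' (- (j + k - l)) = mpow_int L' (- (j - l))"
    using mpow_add[OF invq, of k "- (j + k - l)"] by (simp add: algebra_simps)
  have q2: "mpow_int L' (k - l) ** mpow_int L' (- (j + k - l)) = mpow_int L' (- j)"
    using mpow_add[OF invq, of "k - l" "- (j + k - l)"] by (simp add: algebra_simps)
  have p1: "mpow_int L j ** mpow_int L k = mpow_int L (j + k)"
    using mpow_add[OF invp, of j k] by simp
  have p2: "mpow_int L j ** mpow_int L (k - l) = mpow_int L (j + k - l)"
    using mpow_add[OF invp, of j "k - l"] by (simp add: algebra_simps)
  have QT: "(- (mpow_int L' k + mpow_int L' (k - l))) ** (E' ** mpow_int L' (- (j + k - l)) ** X ** E ** mpow_int L (j + k - l))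
     = E' ** (- (mpow_int L' k ** mpow_int L' (- (j + k - l)) + mpow_int L' (k - l) ** mpow_int L' (- (j + k - l)))) ** X ** E ** mpow_int L (j + k - l)"
  proof -
    have "(- (mpow_int L' k + mpow_int L' (k - l))) ** (E' ** mpow_int L' (- (j + k - l)) ** X ** E ** mpow_int L (j + k - l))
      = E' ** (- (mpow_int L' k + mpow_int L' (k - l))) ** mpow_int L' (- (j + k - l)) ** X ** E ** mpow_int L (j + k - l)"
      by (simp only: matrix_mul_assoc QE)
    then show ?thesis by (simp only: mms)
  qed
  have QT2: "(- (mpow_int L' k + mpow_int L' (k - l))) ** (E' ** mpow_int L' (- (j + k - l)) ** X ** E ** mpow_int L (j + k - l))
     = - (E' ** mpow_int L' (- (j - l)) ** X ** E ** mpow_int L (j + k - l)) - E' ** mpow_int L' (- j) ** X ** E ** mpow_int L (j + k - l)"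
    unfolding QT q1 q2 by (simp add: mms)
  have TP: "(E' ** mpow_int L' (- j) ** X ** E ** mpow_int L j) ** (- (mpow_int L k + mpow_int L (k - l)))
     = - (E' ** mpow_int L' (- j) ** X ** E ** mpow_int L (j + k)) - E' ** mpow_int L' (- j) ** X ** E ** mpow_int L (j + k - l)"
    by (simp add: mms chain[OF p1] chain[OF p2])
  have cr: "E' ** mpow_int L' (- j) ** X ** E ** mpow_int L (j + k)
      = E' ** mpow_int L' (- (j - l)) ** X ** E ** mpow_int L (j + k - l) + E' ** mpow_int L' (- (j - l)) ** B ** A ** E ** mpow_int L (j + k - l)"
    using T3_core[OF invp invq EL Xeq, of E' "- (j - l)" "j + k - l"] by (simp add: algebra_simps)
  show ?thesis
    unfolding QT2 TP cr by (simp add: mms algebra_simps)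
qed

lemma mm_zero_left[simp]: "(0::complex^'k^'m) ** (B::complex^'n^'k) = 0"
  by (simp add: vec_eq_iff matrix_matrix_mult_def)

lemma mm_zero_right[simp]: "(A::complex^'k^'m) ** (0::complex^'n^'k) = 0"
  by (simp add: vec_eq_iff matrix_matrix_mult_def)

lemma dE: "((\<lambda>s. mexp (s *\<^sub>R M)) has_vector_derivative (mexp (t *\<^sub>R M) ** M)) (at t)"
  using mexp_deriv[of M t] mexp_commute_s[OF refl, of M t] by simp

lemma dE':
  "((\<lambda>s. mexp ((- s) *\<^sub>R M)) has_vector_derivative (- (mexp ((- t) *\<^sub>R M) ** M))) (at t)"
proof -
  have "((\<lambda>s. mexp (s *\<^sub>R (- M))) has_vector_derivative ((- M) ** mexp (t *\<^sub>R (- M)))) (at t)"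
    by (rule mexp_deriv)
  moreover have "(\<lambda>s. mexp (s *\<^sub>R (- M))) = (\<lambda>s. mexp ((- s) *\<^sub>R M))" by simp
  moreover have "(- M) ** mexp (t *\<^sub>R (- M)) = - (mexp ((- t) *\<^sub>R M) ** M)"
    using mexp_commute_s[OF refl, of M "- t"] by (simp add: mm_neg_left)
  ultimately show ?thesis by simp
qed

lemma dT1:
  assumes inv: "invertible (L::complex^'n^'n)"
  shows "((\<lambda>s. (A::complex^'n^'m) ** mexp (s *\<^sub>R mpow_int L l) ** mpow_int L j) has_vector_derivative
     (A ** mexp (t *\<^sub>R mpow_int L l) ** mpow_int L (j + l))) (at t)"
proof -
  have "((\<lambda>s. A ** mexp (s *\<^sub>R mpow_int L l) ** mpow_int L j) has_vector_derivative
     ((A ** mexp (t *\<^sub>R mpow_int L l)) ** 0 + (A ** (mexp (t *\<^sub>R mpow_int L l) ** mpow_int L l) + 0 ** mexp (t *\<^sub>R mpow_int L l)) ** mpow_int L j)) (at t)"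
    by (intro deriv_mm dE has_vector_derivative_const)
  moreover have "mpow_int L (j + l) = mpow_int L l ** mpow_int L j"
    using mpow_add[OF inv, of l j] by (simp add: add.commute)
  ultimately show ?thesis by (simp add: matrix_mul_assoc)
qed

lemma dT2:
  assumes inv: "invertible (L::complex^'n^'n)"
  shows "((\<lambda>s. mexp ((- s) *\<^sub>R mpow_int L l) ** mpow_int L (- j) ** (B::complex^'m^'n)) has_vector_derivative
     (- (mexp ((- t) *\<^sub>R mpow_int L l) ** mpow_int L (- (j - l)) ** B))) (at t)"
proof -
  have "((\<lambda>s. mexp ((- s) *\<^sub>R mpow_int L l) ** mpow_int L (- j) ** B) has_vector_derivative
     ((mexp ((- t) *\<^sub>R mpow_int L l) ** mpow_int L (- j)) ** 0 + (mexp ((- t) *\<^sub>R mpow_int L l) ** 0 + (- (mexp ((- t) *\<^sub>R mpow_int L l) ** mpow_int L l)) ** mpow_int L (- j)) ** B)) (at t)"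
    by (intro deriv_mm dE' has_vector_derivative_const)
  moreover have "mpow_int L (- (j - l)) = mpow_int L l ** mpow_int L (- j)"
    using mpow_add[OF inv, of l "- j"] by (simp add: algebra_simps)
  ultimately show ?thesis by (simp add: matrix_mul_assoc mm_neg_left)
qed

lemma dT3:
  assumes invp: "invertible (L::complex^'n^'n)" and invq: "invertible (L'::complex^'n^'n)"
    and Xeq: "mpow_int L' (- l) ** X ** mpow_int L l - X = B ** A"
  shows "((\<lambda>s. mexp ((- s) *\<^sub>R mpow_int L' l) ** mpow_int L' (- j) ** X ** mexp (s *\<^sub>R mpow_int L l) ** mpow_int L j) has_vector_derivative
     ((mexp ((- t) *\<^sub>R mpow_int L' l) ** mpow_int L' (- (j - l)) ** B) ** (A ** mexp (t *\<^sub>R mpow_int L l) ** mpow_int L j))) (at t)"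
proof -
  define E where "E = mexp (t *\<^sub>R mpow_int L l)"
  define E' where "E' = mexp ((- t) *\<^sub>R mpow_int L' l)"
  have EL: "E ** mpow_int L l = mpow_int L l ** E" unfolding E_def using E_comm[OF invp, of l t l] by simp
  have "((\<lambda>s. mexp ((- s) *\<^sub>R mpow_int L' l) ** mpow_int L' (- j) ** X ** mexp (s *\<^sub>R mpow_int L l) ** mpow_int L j) has_vector_derivative
     ((E' ** mpow_int L' (- j) ** X ** E) ** 0 + ((E' ** mpow_int L' (- j) ** X) ** (E ** mpow_int L l)
        + ((E' ** mpow_int L' (- j)) ** 0 + (E' ** 0 + (- (E' ** mpow_int L' l)) ** mpow_int L' (- j)) ** X) ** E) ** mpow_int L j)) (at t)"
    unfolding E_def E'_def by (intro deriv_mm dE dE' has_vector_derivative_const)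
  moreover have q: "mpow_int L' (- (j - l)) = mpow_int L' l ** mpow_int L' (- j)"
    using mpow_add[OF invq, of l "- j"] by (simp add: algebra_simps)
  moreover have p: "mpow_int L (j + l) = mpow_int L l ** mpow_int L j"
    using mpow_add[OF invp, of l j] by (simp add: add.commute)
  moreover have cr: "E' ** mpow_int L' (- j) ** X ** E ** mpow_int L (j + l)
      = E' ** mpow_int L' (- (j - l)) ** X ** E ** mpow_int L j + E' ** mpow_int L' (- (j - l)) ** B ** A ** E ** mpow_int L j"
    using T3_core[OF invp invq EL Xeq, of E' "- (j - l)" j] by (simp add: algebra_simps)
  ultimately show ?thesis
    unfolding E_def[symmetric] E'_def[symmetric]
    by (simp add: mms mm_neg_left)
qed


lemma mm_sum_left: "(sum f S :: complex^'k^'m) ** (C::complex^'n^'k) = sum (\<lambda>x. f x ** C) S"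
  by (induction S rule: infinite_finite_induct) (simp_all add: mm_add_left)

lemma mm_sum_right: "(C::complex^'k^'m) ** (sum f S :: complex^'n^'k) = sum (\<lambda>x. C ** f x) S"
  by (induction S rule: infinite_finite_induct) (simp_all add: matrix_add_ldistrib)

lemma tele_nat:
  fixes g :: "int \<Rightarrow> 'a::real_vector"
  shows "sum (\<lambda>i. g (i + 1) - g i + c) {a..a + int n - 1} = g (a + int n) - g a + real n *\<^sub>R c"
proof (induction n)
  case 0
  then show ?case by simp
next
  case (Suc n)
  have s: "{a..a + int (Suc n) - 1} = insert (a + int n) {a..a + int n - 1}" by auto
  show ?case
    unfolding s using Suc by (simp add: algebra_simps)
qed

lemma tele_int:
  fixes g :: "int \<Rightarrow> 'a::real_vector"
  assumes "a \<le> b + 1"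
  shows "sum (\<lambda>i. g (i + 1) - g i + c) {a..b} = g (b + 1) - g a + real_of_int (b - a + 1) *\<^sub>R c"
proof -
  define n where "n = nat (b - a + 1)"
  have b: "b = a + int n - 1" using assms by (simp add: n_def)
  show ?thesis unfolding b using tele_nat[of g c a n] by simp
qed

lemma isum_tele:
  fixes f :: "int \<Rightarrow> 'a::real_vector"
  shows "isum (\<lambda>i. f (j + i + 1) - f (j + i) + c) a b = f (j + b + 1) - f (j + a) + real_of_int (b - a + 1) *\<^sub>R c"
proof (cases "a \<le> b + 1")
  case True
  then show ?thesis unfolding isum_def using tele_int[of a b "\<lambda>i. f (j + i)" c] by (simp add: add.assoc)
next
  case False
  have "sum (\<lambda>i. f (j + i + 1) - f (j + i) + c) {b + 1..a - 1} = f (j + a) - f (j + b + 1) + real_of_int (a - 1 - (b + 1) + 1) *\<^sub>R c"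
    using tele_int[of "b + 1" "a - 1" "\<lambda>i. f (j + i)" c] False by (simp add: add.assoc)
  then show ?thesis unfolding isum_def using False by (simp add: algebra_simps)
qed


theorem mainTheorem4:
  fixes k l :: int
    and P Q :: "complex^'n^'n"
    and RP RQ :: "(complex^'n^'n) set"
    and A :: "complex^'n^'n \<Rightarrow> complex^'n^'m"
    and B :: "complex^'n^'n \<Rightarrow> complex^'m^'n"
    and X :: "complex^'n^'n \<Rightarrow> complex^'n^'n \<Rightarrow> complex^'n^'n"
    and \<omega> \<omega>' :: "real \<Rightarrow> complex^'n^'n"
    and \<phi>0 :: "complex^'m^'m"
    and \<theta> \<eta> \<Omega> :: "real \<Rightarrow> int \<Rightarrow> _"
    and \<phi> qh rt W :: "real \<Rightarrow> int \<Rightarrow> _"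
  assumes kpos: "k > 0"
    and finP: "finite RP" and finQ: "finite RQ"
    and RP_inv: "\<And>\<Lambda>. \<Lambda> \<in> RP \<Longrightarrow> invertible \<Lambda>"
    and RP_eq: "\<And>\<Lambda>. \<Lambda> \<in> RP \<Longrightarrow> - (mpow_int \<Lambda> k + mpow_int \<Lambda> (k - l)) = P"
    and RQ_inv: "\<And>\<Lambda>'. \<Lambda>' \<in> RQ \<Longrightarrow> invertible \<Lambda>'"
    and RQ_eq: "\<And>\<Lambda>'. \<Lambda>' \<in> RQ \<Longrightarrow> - (mpow_int \<Lambda>' k + mpow_int \<Lambda>' (k - l)) = Q"
    and X_eq: "\<And>\<Lambda> \<Lambda>'. \<Lambda> \<in> RP \<Longrightarrow> \<Lambda>' \<in> RQ \<Longrightarrow>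
        mpow_int \<Lambda>' (- l) ** X \<Lambda>' \<Lambda> ** mpow_int \<Lambda> l - X \<Lambda>' \<Lambda> = B \<Lambda>' ** A \<Lambda>"
    and \<omega>_deriv: "\<And>t. (\<omega> has_vector_derivative \<omega>' t) (at t)"
    and \<omega>_comm: "\<And>t. Q ** \<omega> t = \<omega> t ** P"
    and \<theta>_def: "\<theta> \<equiv> (\<lambda>t j. \<Sum>\<Lambda>\<in>RP. A \<Lambda> ** mexp (t *\<^sub>R mpow_int \<Lambda> l) ** mpow_int \<Lambda> j)"
    and \<eta>_def: "\<eta> \<equiv> (\<lambda>t j. \<Sum>\<Lambda>'\<in>RQ. mexp (- t *\<^sub>R mpow_int \<Lambda>' l) ** mpow_int \<Lambda>' (- j) ** B \<Lambda>')"
    and \<Omega>_def: "\<Omega> \<equiv> (\<lambda>t j. (\<Sum>\<Lambda>\<in>RP. \<Sum>\<Lambda>'\<in>RQ.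
        mexp (- t *\<^sub>R mpow_int \<Lambda>' l) ** mpow_int \<Lambda>' (- j) ** X \<Lambda>' \<Lambda>
          ** mexp (t *\<^sub>R mpow_int \<Lambda> l) ** mpow_int \<Lambda> j) + \<omega> t)"
    and \<Omega>_inv: "\<And>t j. invertible (\<Omega> t j)"
    and \<phi>_def: "\<phi> \<equiv> (\<lambda>t j. \<phi>0 + \<theta> t j ** matrix_inv (\<Omega> t j) ** \<eta> t (j - l))"
    and qh_def: "qh \<equiv> (\<lambda>t j. - (\<theta> t j ** matrix_inv (\<Omega> t j) ** (- \<omega>' t)))"
    and rt_def: "rt \<equiv> (\<lambda>t j. - (matrix_inv (\<Omega> t (j + l)) ** \<eta> t j))"
    and W_def: "W \<equiv> (\<lambda>t j. \<phi> t (j + 1) - \<phi> t j + (1 / real_of_int k) *\<^sub>R mat 1)"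
  shows
    "(\<forall>t j.
        ((\<lambda>s. \<phi> s (j + k) - \<phi> s j) has_vector_derivative
          ((qh t (j + k) ** rt t (j + k - l) - qh t j ** rt t (j - l))
           - (\<phi> t (j + k) - \<phi> t j + mat 1) ** (\<phi> t (j + k) - \<phi> t (j + k - l))
           + (\<phi> t (j + l) - \<phi> t j) ** (\<phi> t (j + k) - \<phi> t j + mat 1))) (at t)
      \<and> qh t (j + k) = - ((\<phi> t (j + k) - \<phi> t j + mat 1) ** qh t (j + k - l)) - qh t j ** P
      \<and> rt t (j - l) = - (rt t j ** (\<phi> t (j + k) - \<phi> t j + mat 1)) - P ** rt t (j + k - l))
   \<and> (\<forall>t j.
        ((\<lambda>s. isum (\<lambda>i. W s (j + i)) 0 (k - 1)) has_vector_derivative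
          ((qh t (j + k) ** rt t (j + k - l) - qh t j ** rt t (j - l))
           - isum (\<lambda>i. W t (j + i)) 0 (k - 1) ** isum (\<lambda>i. W t (j + i)) (k - l) (k - 1)
           + isum (\<lambda>i. W t (j + i)) 0 (l - 1) ** isum (\<lambda>i. W t (j + i)) 0 (k - 1))) (at t)
      \<and> qh t (j + k) = - (isum (\<lambda>i. W t (j + i)) 0 (k - 1) ** qh t (j + k - l)) - qh t j ** P
      \<and> rt t (j - l) = - (rt t j ** isum (\<lambda>i. W t (j + i)) 0 (k - 1)) - P ** rt t (j + k - l))"
proof -
  have EL: "\<And>\<Lambda> s. \<Lambda> \<in> RP \<Longrightarrow> mexp (s *\<^sub>R mpow_int \<Lambda> l) ** mpow_int \<Lambda> l = mpow_int \<Lambda> l ** mexp (s *\<^sub>R mpow_int \<Lambda> l)"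
    using E_comm[OF RP_inv] by metis
  have QE: "\<And>\<Lambda>' s. \<Lambda>' \<in> RQ \<Longrightarrow> Q ** mexp (s *\<^sub>R mpow_int \<Lambda>' l) = mexp (s *\<^sub>R mpow_int \<Lambda>' l) ** Q"
    using P_comm_E[OF RQ_inv] RQ_eq by metis
  have QE': "\<And>\<Lambda>' s. \<Lambda>' \<in> RQ \<Longrightarrow> (- (mpow_int \<Lambda>' k + mpow_int \<Lambda>' (k - l))) ** mexp (s *\<^sub>R mpow_int \<Lambda>' l) = mexp (s *\<^sub>R mpow_int \<Lambda>' l) ** (- (mpow_int \<Lambda>' k + mpow_int \<Lambda>' (k - l)))"
    using P_comm_E[OF RQ_inv] by metis
  have th_R2: "\<theta> t (j + k) + \<theta> t (j + k - l) = - (\<theta> t j ** P)" for t j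
  proof -
    have "\<theta> t (j + k) + \<theta> t (j + k - l) = (\<Sum>\<Lambda>\<in>RP. A \<Lambda> ** mexp (t *\<^sub>R mpow_int \<Lambda> l) ** mpow_int \<Lambda> (j + k)
        + A \<Lambda> ** mexp (t *\<^sub>R mpow_int \<Lambda> l) ** mpow_int \<Lambda> (j + k - l))"
      unfolding \<theta>_def by (simp add: sum.distrib)
    also have "\<dots> = (\<Sum>\<Lambda>\<in>RP. - (A \<Lambda> ** mexp (t *\<^sub>R mpow_int \<Lambda> l) ** mpow_int \<Lambda> j ** P))"
    proof (rule sum.cong[OF refl])
      fix \<Lambda> assume a: "\<Lambda> \<in> RP"
      show "A \<Lambda> ** mexp (t *\<^sub>R mpow_int \<Lambda> l) ** mpow_int \<Lambda> (j + k)
        + A \<Lambda> ** mexp (t *\<^sub>R mpow_int \<Lambda> l) ** mpow_int \<Lambda> (j + k - l) = - (A \<Lambda> ** mexp (t *\<^sub>R mpow_int \<Lambda> l) ** mpow_int \<Lambda> j ** P)"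
        using T1_R2[OF RP_inv[OF a], of "A \<Lambda>" "mexp (t *\<^sub>R mpow_int \<Lambda> l)" j k l] unfolding RP_eq[OF a] .
    qed
    also have "\<dots> = - (\<theta> t j ** P)" unfolding \<theta>_def by (simp add: mm_sum_left sum_negf)
    finally show ?thesis .
  qed
  have et_R3: "\<eta> t (j - l) + \<eta> t j = - (Q ** \<eta> t (j + k - l))" for t j
  proof -
    have "\<eta> t (j - l) + \<eta> t j = (\<Sum>\<Lambda>'\<in>RQ. mexp (- t *\<^sub>R mpow_int \<Lambda>' l) ** mpow_int \<Lambda>' (- (j - l)) ** B \<Lambda>'
        + mexp (- t *\<^sub>R mpow_int \<Lambda>' l) ** mpow_int \<Lambda>' (- j) ** B \<Lambda>')"
      unfolding \<eta>_def by (simp add: sum.distrib)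
    also have "\<dots> = (\<Sum>\<Lambda>'\<in>RQ. - (Q ** mexp (- t *\<^sub>R mpow_int \<Lambda>' l) ** mpow_int \<Lambda>' (- (j + k - l)) ** B \<Lambda>'))"
    proof (rule sum.cong[OF refl])
      fix \<Lambda>' assume a: "\<Lambda>' \<in> RQ"
      show "mexp (- t *\<^sub>R mpow_int \<Lambda>' l) ** mpow_int \<Lambda>' (- (j - l)) ** B \<Lambda>'
        + mexp (- t *\<^sub>R mpow_int \<Lambda>' l) ** mpow_int \<Lambda>' (- j) ** B \<Lambda>' = - (Q ** mexp (- t *\<^sub>R mpow_int \<Lambda>' l) ** mpow_int \<Lambda>' (- (j + k - l)) ** B \<Lambda>')"
        using T2_R3[OF RQ_inv[OF a] QE'[OF a, of "- t"], where j=j and B="B \<Lambda>'"] unfolding RQ_eq[OF a] .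
    qed
    also have "\<dots> = - (Q ** \<eta> t (j + k - l))" unfolding \<eta>_def by (simp add: mm_sum_right sum_negf matrix_mul_assoc)
    finally show ?thesis .
  qed
  have ethe: "\<eta> t j' ** \<theta> t j = (\<Sum>\<Lambda>\<in>RP. \<Sum>\<Lambda>'\<in>RQ. (mexp (- t *\<^sub>R mpow_int \<Lambda>' l) ** mpow_int \<Lambda>' (- j') ** B \<Lambda>')
        ** (A \<Lambda> ** mexp (t *\<^sub>R mpow_int \<Lambda> l) ** mpow_int \<Lambda> j))" for t j j'
    unfolding \<eta>_def \<theta>_def by (simp add: mm_sum_left mm_sum_right sum.swap[of _ RQ])
  have Om_R1: "\<Omega> t (j + l) = \<Omega> t j + \<eta> t j ** \<theta> t j" for t j
  proof -
    have "\<Omega> t (j + l) - \<Omega> t j = (\<Sum>\<Lambda>\<in>RP. \<Sum>\<Lambda>'\<in>RQ.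
        mexp (- t *\<^sub>R mpow_int \<Lambda>' l) ** mpow_int \<Lambda>' (- (j + l)) ** X \<Lambda>' \<Lambda> ** mexp (t *\<^sub>R mpow_int \<Lambda> l) ** mpow_int \<Lambda> (j + l)
      - mexp (- t *\<^sub>R mpow_int \<Lambda>' l) ** mpow_int \<Lambda>' (- j) ** X \<Lambda>' \<Lambda> ** mexp (t *\<^sub>R mpow_int \<Lambda> l) ** mpow_int \<Lambda> j)"
      unfolding \<Omega>_def by (simp add: sum_subtractf)
    also have "\<dots> = \<eta> t j ** \<theta> t j"
      unfolding ethe
    proof (intro sum.cong refl)
      fix \<Lambda> \<Lambda>' assume a: "\<Lambda> \<in> RP" and b: "\<Lambda>' \<in> RQ"
      show "mexp (- t *\<^sub>R mpow_int \<Lambda>' l) ** mpow_int \<Lambda>' (- (j + l)) ** X \<Lambda>' \<Lambda> ** mexp (t *\<^sub>R mpow_int \<Lambda> l) ** mpow_int \<Lambda> (j + l)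
      - mexp (- t *\<^sub>R mpow_int \<Lambda>' l) ** mpow_int \<Lambda>' (- j) ** X \<Lambda>' \<Lambda> ** mexp (t *\<^sub>R mpow_int \<Lambda> l) ** mpow_int \<Lambda> j
        = (mexp (- t *\<^sub>R mpow_int \<Lambda>' l) ** mpow_int \<Lambda>' (- j) ** B \<Lambda>') ** (A \<Lambda> ** mexp (t *\<^sub>R mpow_int \<Lambda> l) ** mpow_int \<Lambda> j)"
        by (rule T3_R1[OF RP_inv[OF a] RQ_inv[OF b] EL[OF a] X_eq[OF a b]])
    qed
    finally show ?thesis by (simp add: algebra_simps)
  qed
  have Om_R4: "Q ** \<Omega> t (j + k - l) = \<Omega> t j ** P + \<eta> t (j - l) ** \<theta> t (j + k - l)" for t j
  proof -
    have "Q ** \<Omega> t (j + k - l) - \<Omega> t j ** P = (\<Sum>\<Lambda>\<in>RP. \<Sum>\<Lambda>'\<in>RQ.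
        Q ** (mexp (- t *\<^sub>R mpow_int \<Lambda>' l) ** mpow_int \<Lambda>' (- (j + k - l)) ** X \<Lambda>' \<Lambda> ** mexp (t *\<^sub>R mpow_int \<Lambda> l) ** mpow_int \<Lambda> (j + k - l))
      - (mexp (- t *\<^sub>R mpow_int \<Lambda>' l) ** mpow_int \<Lambda>' (- j) ** X \<Lambda>' \<Lambda> ** mexp (t *\<^sub>R mpow_int \<Lambda> l) ** mpow_int \<Lambda> j) ** P)
      + (Q ** \<omega> t - \<omega> t ** P)"
      unfolding \<Omega>_def by (simp add: sum_subtractf mm_sum_left mm_sum_right matrix_add_ldistrib mm_add_left)
    also have "\<dots> = \<eta> t (j - l) ** \<theta> t (j + k - l)"
      unfolding ethe \<omega>_comm diff_self add_0_right
    proof (intro sum.cong refl)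
      fix \<Lambda> \<Lambda>' assume a: "\<Lambda> \<in> RP" and b: "\<Lambda>' \<in> RQ"
      show "Q ** (mexp (- t *\<^sub>R mpow_int \<Lambda>' l) ** mpow_int \<Lambda>' (- (j + k - l)) ** X \<Lambda>' \<Lambda> ** mexp (t *\<^sub>R mpow_int \<Lambda> l) ** mpow_int \<Lambda> (j + k - l))
      - (mexp (- t *\<^sub>R mpow_int \<Lambda>' l) ** mpow_int \<Lambda>' (- j) ** X \<Lambda>' \<Lambda> ** mexp (t *\<^sub>R mpow_int \<Lambda> l) ** mpow_int \<Lambda> j) ** P
        = (mexp (- t *\<^sub>R mpow_int \<Lambda>' l) ** mpow_int \<Lambda>' (- (j - l)) ** B \<Lambda>') ** (A \<Lambda> ** mexp (t *\<^sub>R mpow_int \<Lambda> l) ** mpow_int \<Lambda> (j + k - l))"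
        using T3_R4[OF RP_inv[OF a] RQ_inv[OF b] EL[OF a] X_eq[OF a b] QE'[OF b, of "- t"], where j=j]
        unfolding RP_eq[OF a] RQ_eq[OF b] .
    qed
    finally show ?thesis by (simp add: algebra_simps)
  qed
  have w_comm: "Q ** \<omega>' t = \<omega>' t ** P" for t
  proof -
    have d1: "((\<lambda>s. Q ** \<omega> s - \<omega> s ** P) has_vector_derivative (Q ** \<omega>' t + 0 ** \<omega> t) - (\<omega> t ** 0 + \<omega>' t ** P)) (at t)"
      by (intro has_vector_derivative_diff deriv_mm has_vector_derivative_const \<omega>_deriv)
    have "(\<lambda>s. Q ** \<omega> s - \<omega> s ** P) = (\<lambda>s. 0)" by (simp add: \<omega>_comm)
    then have d2: "((\<lambda>s. Q ** \<omega> s - \<omega> s ** P) has_vector_derivative 0) (at t)" by simp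
    from vector_derivative_unique_at[OF d1 d2] show ?thesis by simp
  qed
  have dth: "((\<lambda>s. \<theta> s j) has_vector_derivative \<theta> t (j + l)) (at t)" for t j
    unfolding \<theta>_def by (rule has_vector_derivative_sum) (rule dT1[OF RP_inv], assumption)
  have deta: "((\<lambda>s. \<eta> s j) has_vector_derivative - \<eta> t (j - l)) (at t)" for t j
  proof -
    have "((\<lambda>s. \<eta> s j) has_vector_derivative
        (\<Sum>\<Lambda>'\<in>RQ. - (mexp (- t *\<^sub>R mpow_int \<Lambda>' l) ** mpow_int \<Lambda>' (- (j - l)) ** B \<Lambda>'))) (at t)"
      unfolding \<eta>_def by (rule has_vector_derivative_sum) (rule dT2[OF RQ_inv], assumption)
    then show ?thesis unfolding \<eta>_def by (simp add: sum_negf)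
  qed
  have dOm: "((\<lambda>s. \<Omega> s j) has_vector_derivative \<eta> t (j - l) ** \<theta> t j + \<omega>' t) (at t)" for t j
  proof -
    have "((\<lambda>s. \<Omega> s j) has_vector_derivative
        (\<Sum>\<Lambda>\<in>RP. \<Sum>\<Lambda>'\<in>RQ. (mexp (- t *\<^sub>R mpow_int \<Lambda>' l) ** mpow_int \<Lambda>' (- (j - l)) ** B \<Lambda>')
        ** (A \<Lambda> ** mexp (t *\<^sub>R mpow_int \<Lambda> l) ** mpow_int \<Lambda> j)) + \<omega>' t) (at t)"
      unfolding \<Omega>_def
      by (intro has_vector_derivative_add \<omega>_deriv has_vector_derivative_sum dT3[OF RP_inv RQ_inv X_eq]; assumption)
    then show ?thesis unfolding ethe .
  qed
  have dphi: "((\<lambda>s. \<phi> s j) has_vector_derivative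
      \<theta> t j ** matrix_inv (\<Omega> t j) ** (- \<eta> t (j - l - l))
      + (\<theta> t j ** (- (matrix_inv (\<Omega> t j) ** (\<eta> t (j - l) ** \<theta> t j + \<omega>' t) ** matrix_inv (\<Omega> t j)))
         + \<theta> t (j + l) ** matrix_inv (\<Omega> t j)) ** \<eta> t (j - l)) (at t)" for t j
  proof -
    have "((\<lambda>s. \<phi>0 + \<theta> s j ** matrix_inv (\<Omega> s j) ** \<eta> s (j - l)) has_vector_derivative
      0 + (\<theta> t j ** matrix_inv (\<Omega> t j) ** (- \<eta> t (j - l - l))
      + (\<theta> t j ** (- (matrix_inv (\<Omega> t j) ** (\<eta> t (j - l) ** \<theta> t j + \<omega>' t) ** matrix_inv (\<Omega> t j)))
         + \<theta> t (j + l) ** matrix_inv (\<Omega> t j)) ** \<eta> t (j - l))) (at t)"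
      by (intro has_vector_derivative_add has_vector_derivative_const deriv_mm dth deta inv_deriv dOm \<Omega>_inv)
    then show ?thesis unfolding \<phi>_def by simp
  qed
  have inv1: "\<And>t j. matrix_inv (\<Omega> t j) ** \<Omega> t j = mat 1" using inv_lr(2)[OF \<Omega>_inv] by blast
  have inv2: "\<And>t j. \<Omega> t j ** matrix_inv (\<Omega> t j) = mat 1" using inv_lr(1)[OF \<Omega>_inv] by blast
  have key: "(\<theta> t (j+k) ** matrix_inv (\<Omega> t (j+k)) ** (- \<eta> t (j + k - l - l))
      + (\<theta> t (j+k) ** (- (matrix_inv (\<Omega> t (j+k)) ** (\<eta> t (j + k - l) ** \<theta> t (j+k) + \<omega>' t) ** matrix_inv (\<Omega> t (j+k))))
         + \<theta> t (j + k + l) ** matrix_inv (\<Omega> t (j+k))) ** \<eta> t (j + k - l))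
    - (\<theta> t j ** matrix_inv (\<Omega> t j) ** (- \<eta> t (j - l - l))
      + (\<theta> t j ** (- (matrix_inv (\<Omega> t j) ** (\<eta> t (j - l) ** \<theta> t j + \<omega>' t) ** matrix_inv (\<Omega> t j)))
         + \<theta> t (j + l) ** matrix_inv (\<Omega> t j)) ** \<eta> t (j - l))
    = (qh t (j + k) ** rt t (j + k - l) - qh t j ** rt t (j - l))
           - (\<phi> t (j + k) - \<phi> t j + mat 1) ** (\<phi> t (j + k) - \<phi> t (j + k - l))
           + (\<phi> t (j + l) - \<phi> t j) ** (\<phi> t (j + k) - \<phi> t j + mat 1)" for t j
  proof -
    note alg = algT[where th="\<theta> t" and et="\<eta> t" and Om="\<Omega> t" and G="\<lambda>j. matrix_inv (\<Omega> t j)"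
        and P=P and Q=Q and k=k and l=l and j=j, OF inv1 inv2 Om_R1 th_R2 et_R3 Om_R4]
    have u: "\<phi> t (j + k) - \<phi> t j + mat 1 = mat 1 + \<theta> t (j+k) ** matrix_inv (\<Omega> t (j+k)) ** \<eta> t (j+k-l) - \<theta> t j ** matrix_inv (\<Omega> t j) ** \<eta> t (j-l)"
      unfolding \<phi>_def by (simp add: algebra_simps)
    have v: "\<phi> t (j + k) - \<phi> t (j + k - l) = \<theta> t (j+k) ** matrix_inv (\<Omega> t (j+k)) ** \<eta> t (j+k-l) - \<theta> t (j+k-l) ** matrix_inv (\<Omega> t (j+k-l)) ** \<eta> t (j+k-l-l)"
      unfolding \<phi>_def by (simp add: algebra_simps)
    have w: "\<phi> t (j + l) - \<phi> t j = \<theta> t (j+l) ** matrix_inv (\<Omega> t (j+l)) ** \<eta> t j - \<theta> t j ** matrix_inv (\<Omega> t j) ** \<eta> t (j-l)"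
      unfolding \<phi>_def by simp
    have r: "\<And>X Y Z::complex^'m^'m. X - Y + Z = X + (- Y + Z)" by (simp add: algebra_simps)
    show ?thesis
      unfolding u v w
      unfolding r
      unfolding alg[symmetric]
      unfolding qh_def rt_def
      by (simp add: mms algebra_simps)
  qed
  have uu: "\<phi> t (j + k) - \<phi> t j + mat 1 = mat 1 + \<theta> t (j+k) ** matrix_inv (\<Omega> t (j+k)) ** \<eta> t (j+k-l) - \<theta> t j ** matrix_inv (\<Omega> t j) ** \<eta> t (j-l)" for t j
    unfolding \<phi>_def by (simp add: algebra_simps)
  have qh_eq: "qh t (j + k) = - ((\<phi> t (j + k) - \<phi> t j + mat 1) ** qh t (j + k - l)) - qh t j ** P" for t j
  proof -
    note a = algA[where th="\<theta> t" and et="\<eta> t" and Om="\<Omega> t" and G="\<lambda>j. matrix_inv (\<Omega> t j)"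
        and P=P and Q=Q and k=k and l=l and j=j, OF inv1 inv2 Om_R1 th_R2 Om_R4]
    have "(\<phi> t (j + k) - \<phi> t j + mat 1) ** qh t (j + k - l)
      = ((mat 1 + \<theta> t (j+k) ** matrix_inv (\<Omega> t (j+k)) ** \<eta> t (j+k-l) - \<theta> t j ** matrix_inv (\<Omega> t j) ** \<eta> t (j-l))
         ** (\<theta> t (j + k - l) ** matrix_inv (\<Omega> t (j + k - l)))) ** \<omega>' t"
      unfolding uu qh_def by (simp add: mm_neg_left mm_neg_right matrix_mul_assoc)
    also have "\<dots> = - (\<theta> t (j+k) ** matrix_inv (\<Omega> t (j+k)) ** \<omega>' t) - \<theta> t j ** matrix_inv (\<Omega> t j) ** (Q ** \<omega>' t)"
      unfolding a by (simp add: mms)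
    also have "\<dots> = - qh t (j + k) - qh t j ** P"
      unfolding w_comm qh_def by (simp add: mms)
    finally show ?thesis by (simp add: algebra_simps eq_neg_iff_add_eq_0)
  qed
  have rt_eq: "rt t (j - l) = - (rt t j ** (\<phi> t (j + k) - \<phi> t j + mat 1)) - P ** rt t (j + k - l)" for t j
  proof -
    note b = algB[where th="\<theta> t" and et="\<eta> t" and Om="\<Omega> t" and G="\<lambda>j. matrix_inv (\<Omega> t j)"
        and P=P and Q=Q and k=k and l=l and j=j, OF inv1 inv2 Om_R1 et_R3 Om_R4]
    have "- (rt t j ** (\<phi> t (j + k) - \<phi> t j + mat 1)) = matrix_inv (\<Omega> t (j + l)) ** \<eta> t j **
        (mat 1 + \<theta> t (j+k) ** matrix_inv (\<Omega> t (j+k)) ** \<eta> t (j+k-l) - \<theta> t j ** matrix_inv (\<Omega> t j) ** \<eta> t (j-l))"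
      unfolding uu rt_def by (simp add: mm_neg_left)
    also have "\<dots> = - (matrix_inv (\<Omega> t j) ** \<eta> t (j - l)) - P ** (matrix_inv (\<Omega> t (j + k)) ** \<eta> t (j + k - l))"
      by (rule b)
    finally show ?thesis unfolding rt_def by (simp add: mm_neg_right)
  qed
  have iW: "isum (\<lambda>i. W s (j + i)) a b = \<phi> s (j + b + 1) - \<phi> s (j + a) + real_of_int (b - a + 1) *\<^sub>R ((1 / real_of_int k) *\<^sub>R mat 1)" for s j a b
    using isum_tele[of "\<phi> s" j "(1 / real_of_int k) *\<^sub>R mat 1" a b] unfolding W_def by simp
  have K0: "isum (\<lambda>i. W s (j + i)) 0 (k - 1) = \<phi> s (j + k) - \<phi> s j + mat 1" for s j
    using iW[of s j 0 "k - 1"] kpos by simp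
  have K1: "isum (\<lambda>i. W s (j + i)) (k - l) (k - 1) = \<phi> s (j + k) - \<phi> s (j + k - l) + real_of_int l *\<^sub>R ((1 / real_of_int k) *\<^sub>R mat 1)" for s j
    using iW[of s j "k - l" "k - 1"] by (simp add: algebra_simps)
  have K2: "isum (\<lambda>i. W s (j + i)) 0 (l - 1) = \<phi> s (j + l) - \<phi> s j + real_of_int l *\<^sub>R ((1 / real_of_int k) *\<^sub>R mat 1)" for s j
    using iW[of s j 0 "l - 1"] by (simp add: algebra_simps)
  show ?thesis
  proof (intro conjI allI)
    fix t j
    show "((\<lambda>s. \<phi> s (j + k) - \<phi> s j) has_vector_derivative
          ((qh t (j + k) ** rt t (j + k - l) - qh t j ** rt t (j - l))
           - (\<phi> t (j + k) - \<phi> t j + mat 1) ** (\<phi> t (j + k) - \<phi> t (j + k - l))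
           + (\<phi> t (j + l) - \<phi> t j) ** (\<phi> t (j + k) - \<phi> t j + mat 1))) (at t)"
      by (rule has_vector_derivative_eq_rhs[OF has_vector_derivative_diff[OF dphi dphi] key])
    show "qh t (j + k) = - ((\<phi> t (j + k) - \<phi> t j + mat 1) ** qh t (j + k - l)) - qh t j ** P"
      by (rule qh_eq)
    show "rt t (j - l) = - (rt t j ** (\<phi> t (j + k) - \<phi> t j + mat 1)) - P ** rt t (j + k - l)"
      by (rule rt_eq)
  next
    fix t j
    show "((\<lambda>s. isum (\<lambda>i. W s (j + i)) 0 (k - 1)) has_vector_derivative
          ((qh t (j + k) ** rt t (j + k - l) - qh t j ** rt t (j - l))
           - isum (\<lambda>i. W t (j + i)) 0 (k - 1) ** isum (\<lambda>i. W t (j + i)) (k - l) (k - 1)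
           + isum (\<lambda>i. W t (j + i)) 0 (l - 1) ** isum (\<lambda>i. W t (j + i)) 0 (k - 1))) (at t)"
    proof -
      have d: "((\<lambda>s. \<phi> s (j + k) - \<phi> s j + mat 1) has_vector_derivative
          ((qh t (j + k) ** rt t (j + k - l) - qh t j ** rt t (j - l))
           - (\<phi> t (j + k) - \<phi> t j + mat 1) ** (\<phi> t (j + k) - \<phi> t (j + k - l))
           + (\<phi> t (j + l) - \<phi> t j) ** (\<phi> t (j + k) - \<phi> t j + mat 1))) (at t)"
        by (rule has_vector_derivative_add_const[THEN iffD2, OF has_vector_derivative_eq_rhs[OF has_vector_derivative_diff[OF dphi dphi] key]])
      have f: "(\<lambda>s. isum (\<lambda>i. W s (j + i)) 0 (k - 1)) = (\<lambda>s. \<phi> s (j + k) - \<phi> s j + mat 1)"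
        using K0 by blast
      have e: "isum (\<lambda>i. W t (j + i)) 0 (k - 1) ** isum (\<lambda>i. W t (j + i)) (k - l) (k - 1)
           = (\<phi> t (j + k) - \<phi> t j + mat 1) ** (\<phi> t (j + k) - \<phi> t (j + k - l)) + real_of_int l *\<^sub>R ((1 / real_of_int k) *\<^sub>R (\<phi> t (j + k) - \<phi> t j + mat 1))"
        unfolding K0 K1 by (simp add: matrix_add_ldistrib mm_scaleR_right)
      have e2: "isum (\<lambda>i. W t (j + i)) 0 (l - 1) ** isum (\<lambda>i. W t (j + i)) 0 (k - 1)
           = (\<phi> t (j + l) - \<phi> t j) ** (\<phi> t (j + k) - \<phi> t j + mat 1) + real_of_int l *\<^sub>R ((1 / real_of_int k) *\<^sub>R (\<phi> t (j + k) - \<phi> t j + mat 1))"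
        unfolding K0 K2 by (simp add: mm_add_left mm_scaleR_left)
      show ?thesis unfolding f e e2 using d by (simp add: algebra_simps)
    qed
    show "qh t (j + k) = - (isum (\<lambda>i. W t (j + i)) 0 (k - 1) ** qh t (j + k - l)) - qh t j ** P"
      unfolding K0 by (rule qh_eq)
    show "rt t (j - l) = - (rt t j ** isum (\<lambda>i. W t (j + i)) 0 (k - 1)) - P ** rt t (j + k - l)"
      unfolding K0 by (rule rt_eq)
  qed
qed

end
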